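(* Let $\gamma<0$ and $\epsilon_{\text{abs}}>0$, and let $\hat g_{+,\gamma}\in\arg\min_{f\in\mathcal{F}}\hat h_{+,\gamma}(f)$. If $\hat h_{+,\gamma}(\hat g_{+,\gamma})\ge0$, then $$\left\{\frac{\hat h_{+,\gamma}(\hat g_{+,\gamma})}{\epsilon_{\text{abs}}}-1\right\}\gamma^{-1}\ge\widehat{MR}(f)$$ for all $f\in\mathcal{F}$ with $\hat e_{\text{orig}}(f)\le\epsilon_{\text{abs}}$; moreover $\widehat{MR}(f)\le|\gamma^{-1}|$ for all $f\in\mathcal{F}$. Additionally, if $\hat h_{+,\gamma}(\hat g_{+,\gamma})\ge0$ and $\hat e_{\text{orig}}(\hat g_{+,\gamma})\le\epsilon_{\text{abs}}$ with at least one of these two inequalities holding with equality, then the displayed inequality holds with equality for $f=\hat g_{+,\gamma}$.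
   Context: Setting: $\mathcal{F}$ a set of prediction models, $L\ge0$ a loss, and a fixed observed sample $(\mathbf{y}_{[i]},\mathbf{X}_{1[i]},\mathbf{X}_{2[i]})$, $i=1,\dots,n$, $n\ge2$. $\hat e_{\text{orig}}(f)=\frac1n\sum_iL\{f,(\mathbf{y}_{[i]},\mathbf{X}_{1[i]},\mathbf{X}_{2[i]})\}$; $\hat e_{\text{switch}}(f)=\frac1{n(n-1)}\sum_i\sum_{j\ne i}L\{f,(\mathbf{y}_{[j]},\mathbf{X}_{1[i]},\mathbf{X}_{2[j]})\}$; $\widehat{MR}(f)=\hat e_{\text{switch}}(f)/\hat e_{\text{orig}}(f)$. For $\gamma\in\mathbb{R}$, $\hat h_{+,\gamma}(f):=\hat e_{\text{orig}}(f)+\gamma\hat e_{\text{switch}}(f)$. Standing assumptions: $\min_{f\in\mathcal{F}}\hat e_{\text{orig}}(f)>0$ and minimizers of $\hat h_{+,\gamma}$ over $\mathcal{F}$ exist. *)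

theory Defs
  imports Complex_Main
begin

definition e_orig ::
  "('f \<Rightarrow> ('y \<times> 'a \<times> 'b) \<Rightarrow> real) \<Rightarrow> nat \<Rightarrow> (nat \<Rightarrow> 'y) \<Rightarrow> (nat \<Rightarrow> 'a) \<Rightarrow> (nat \<Rightarrow> 'b) \<Rightarrow> 'f \<Rightarrow> real" where
  "e_orig L n y X1 X2 f = (1 / real n) * (\<Sum>i<n. L f (y i, X1 i, X2 i))"

definition e_switch ::
  "('f \<Rightarrow> ('y \<times> 'a \<times> 'b) \<Rightarrow> real) \<Rightarrow> nat \<Rightarrow> (nat \<Rightarrow> 'y) \<Rightarrow> (nat \<Rightarrow> 'a) \<Rightarrow> (nat \<Rightarrow> 'b) \<Rightarrow> 'f \<Rightarrow> real" where
  "e_switch L n y X1 X2 f =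
     (1 / (real n * (real n - 1))) * (\<Sum>i<n. \<Sum>j\<in>{..<n} - {i}. L f (y j, X1 i, X2 j))"

definition MR_hat ::
  "('f \<Rightarrow> ('y \<times> 'a \<times> 'b) \<Rightarrow> real) \<Rightarrow> nat \<Rightarrow> (nat \<Rightarrow> 'y) \<Rightarrow> (nat \<Rightarrow> 'a) \<Rightarrow> (nat \<Rightarrow> 'b) \<Rightarrow> 'f \<Rightarrow> real" where
  "MR_hat L n y X1 X2 f = e_switch L n y X1 X2 f / e_orig L n y X1 X2 f"

definition h_plus ::
  "('f \<Rightarrow> ('y \<times> 'a \<times> 'b) \<Rightarrow> real) \<Rightarrow> nat \<Rightarrow> (nat \<Rightarrow> 'y) \<Rightarrow> (nat \<Rightarrow> 'a) \<Rightarrow> (nat \<Rightarrow> 'b) \<Rightarrow> real \<Rightarrow> 'f \<Rightarrow> real" where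
  "h_plus L n y X1 X2 \<gamma> f = e_orig L n y X1 X2 f + \<gamma> * e_switch L n y X1 X2 f"

end

theory Submission
  imports Defs
begin

theorem lemma19:
  fixes F :: "'f set" and L :: "'f \<Rightarrow> ('y \<times> 'a \<times> 'b) \<Rightarrow> real"
    and n :: nat and y :: "nat \<Rightarrow> 'y" and X1 :: "nat \<Rightarrow> 'a" and X2 :: "nat \<Rightarrow> 'b"
    and \<gamma> \<epsilon> :: real and g :: 'f
  assumes n2: "n \<ge> 2"
    and L_nonneg: "\<And>f z. L f z \<ge> 0"
    and min_exists: "\<exists>f0\<in>F. \<forall>f\<in>F. e_orig L n y X1 X2 f0 \<le> e_orig L n y X1 X2 f"
    and eorig_pos: "\<forall>f\<in>F. e_orig L n y X1 X2 f > 0"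
    and gamma_neg: "\<gamma> < 0"
    and eps_pos: "\<epsilon> > 0"
    and g_in: "g \<in> F"
    and g_min: "\<forall>f\<in>F. h_plus L n y X1 X2 \<gamma> g \<le> h_plus L n y X1 X2 \<gamma> f"
  shows "(h_plus L n y X1 X2 \<gamma> g \<ge> 0 \<longrightarrow>
           (\<forall>f\<in>F. e_orig L n y X1 X2 f \<le> \<epsilon> \<longrightarrow>
              (h_plus L n y X1 X2 \<gamma> g / \<epsilon> - 1) * inverse \<gamma> \<ge> MR_hat L n y X1 X2 f)
           \<and> (\<forall>f\<in>F. MR_hat L n y X1 X2 f \<le> \<bar>inverse \<gamma>\<bar>))
         \<and> ((h_plus L n y X1 X2 \<gamma> g \<ge> 0 \<and> e_orig L n y X1 X2 g \<le> \<epsilon>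
              \<and> (h_plus L n y X1 X2 \<gamma> g = 0 \<or> e_orig L n y X1 X2 g = \<epsilon>)) \<longrightarrow>
            (h_plus L n y X1 X2 \<gamma> g / \<epsilon> - 1) * inverse \<gamma> = MR_hat L n y X1 X2 g)"
proof -
  let ?h = "h_plus L n y X1 X2 \<gamma> g"
  let ?eo = "e_orig L n y X1 X2" and ?es = "e_switch L n y X1 X2"
  have hf: "\<And>f. f \<in> F \<Longrightarrow> ?h \<le> ?eo f + \<gamma> * ?es f"
    using g_min by (simp add: h_plus_def)
  have hg: "?h = ?eo g + \<gamma> * ?es g" by (simp add: h_plus_def)
  have key: "(?h / \<epsilon> - 1) * inverse \<gamma> \<ge> ?es f / ?eo f"
    if fF: "f \<in> F" and h0: "?h \<ge> 0" and le: "?eo f \<le> \<epsilon>" for f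
  proof -
    have p: "?eo f > 0" using eorig_pos fF by auto
    have "?h / \<epsilon> \<le> ?h / ?eo f" using h0 le p by (simp add: frac_le)
    also have "\<dots> \<le> 1 + \<gamma> * (?es f / ?eo f)"
      using hf[OF fF] p by (simp add: field_simps)
    finally have "?h / \<epsilon> - 1 \<le> \<gamma> * (?es f / ?eo f)" by simp
    moreover have "\<And>a m. a \<le> \<gamma> * m \<Longrightarrow> m \<le> a * inverse \<gamma>"
    proof -
      fix a m :: real assume "a \<le> \<gamma> * m"
      hence "a * inverse \<gamma> \<ge> (\<gamma> * m) * inverse \<gamma>"
        using gamma_neg by (intro mult_right_mono_neg) auto
      moreover have "(\<gamma> * m) * inverse \<gamma> = m" using gamma_neg by (simp add: field_simps)
      ultimately show "m \<le> a * inverse \<gamma>" by simp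
    qed
    ultimately show ?thesis by blast
  qed
  have part2: "\<And>f. f \<in> F \<Longrightarrow> ?h \<ge> 0 \<Longrightarrow> ?es f / ?eo f \<le> \<bar>inverse \<gamma>\<bar>"
  proof -
    fix f assume fF: "f \<in> F" and h0: "?h \<ge> 0"
    have p: "?eo f > 0" using eorig_pos fF by auto
    have a: "- \<gamma> * ?es f \<le> ?eo f" using hf[OF fF] h0 by linarith
    have "\<bar>inverse \<gamma>\<bar> = 1 / (- \<gamma>)" using gamma_neg by (simp add: abs_if divide_inverse)
    moreover have "?es f / ?eo f \<le> 1 / (- \<gamma>)"
      using a p gamma_neg by (simp add: field_simps)
    ultimately show "?es f / ?eo f \<le> \<bar>inverse \<gamma>\<bar>" by simp
  qed
  have part3: "(?h / \<epsilon> - 1) * inverse \<gamma> = ?es g / ?eo g"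
    if c: "?h = 0 \<or> ?eo g = \<epsilon>"
  proof -
    have p: "?eo g > 0" using eorig_pos g_in by auto
    have "?h / ?eo g - 1 = \<gamma> * (?es g / ?eo g)" using hg p by (simp add: field_simps)
    moreover have "?h / \<epsilon> = ?h / ?eo g" using c by (elim disjE) simp_all
    ultimately have "?h / \<epsilon> - 1 = \<gamma> * (?es g / ?eo g)" by (simp only:)
    thus ?thesis using gamma_neg by (simp add: field_simps)
  qed
  show ?thesis using key part2 part3 by (auto simp: MR_hat_def)
qed

end
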